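(* Let $\mathcal{S}$ be a state space, $\mathcal{A}$ a finite action space, $\pi_{\mathrm{ref}}$ a full-support policy, $\beta>0$, $R>0$, $r^*:\mathcal{S}\times\mathcal{A}\to[0,R]$, and let $\Pi$ be a finite policy class satisfying (I) $\pi^*_{r^*}\in\Pi$ and (II) $|\log(\pi(a|s)/\pi_{\mathrm{ref}}(a|s))|\le R/\beta$ for all $\pi\in\Pi$ and all $(s,a)$. Then $\mathrm{conv}(\Pi)$ also satisfies (I) and (II).
   Context: $\pi^*_{r^*}(a|s)\propto\pi_{\mathrm{ref}}(a|s)e^{r^*(s,a)/\beta}$. $\mathrm{conv}(\Pi)$ is the set of all policies $\sum_{i=1}^n\lambda^i\pi^i$ (pointwise in $(a|s)$) with $n\ge1$, $\lambda^i\ge0$, $\sum_i\lambda^i=1$, $\pi^i\in\Pi$. *)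

theory Defs
  imports Complex_Main
begin

definition is_policy :: "('s \<Rightarrow> 'a::finite \<Rightarrow> real) \<Rightarrow> bool" where
  "is_policy p \<longleftrightarrow> (\<forall>s. (\<forall>a. 0 \<le> p s a) \<and> (\<Sum>a\<in>UNIV. p s a) = 1)"

text \<open>Optimal KL-regularised policy: pi*(a|s) proportional to pi_ref(a|s) exp(r(s,a)/beta).\<close>
definition opt_policy ::
  "('s \<Rightarrow> 'a::finite \<Rightarrow> real) \<Rightarrow> real \<Rightarrow> ('s \<Rightarrow> 'a \<Rightarrow> real) \<Rightarrow> ('s \<Rightarrow> 'a \<Rightarrow> real)" where
  "opt_policy pref \<beta> r = (\<lambda>s a. pref s a * exp (r s a / \<beta>) /
       (\<Sum>b\<in>UNIV. pref s b * exp (r s b / \<beta>)))"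

definition conv_pol :: "('s \<Rightarrow> 'a \<Rightarrow> real) set \<Rightarrow> ('s \<Rightarrow> 'a \<Rightarrow> real) set" where
  "conv_pol P = {q. \<exists>(n::nat) (l::nat \<Rightarrow> real) (p::nat \<Rightarrow> ('s \<Rightarrow> 'a \<Rightarrow> real)).
      n \<ge> 1 \<and> (\<forall>i<n. l i \<ge> 0) \<and> (\<Sum>i<n. l i) = 1 \<and> (\<forall>i<n. p i \<in> P) \<and>
      q = (\<lambda>s a. \<Sum>i<n. l i * p i s a)}"

text \<open>Condition (II): the log-ratio is finite (pi(a|s) > 0) and bounded by R/beta.\<close>
definition bounded_logratio ::
  "('s \<Rightarrow> 'a \<Rightarrow> real) \<Rightarrow> real \<Rightarrow> real \<Rightarrow> ('s \<Rightarrow> 'a \<Rightarrow> real) set \<Rightarrow> bool" where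
  "bounded_logratio pref R \<beta> P \<longleftrightarrow>
     (\<forall>p\<in>P. \<forall>s a. p s a > 0 \<and> \<bar>ln (p s a / pref s a)\<bar> \<le> R / \<beta>)"

end

theory Submission
  imports Defs
begin

lemma abs_ln_iff:
  fixes x c :: real
  assumes "x > 0"
  shows "\<bar>ln x\<bar> \<le> c \<longleftrightarrow> exp (-c) \<le> x \<and> x \<le> exp c"
proof -
  have "ln x \<le> c \<longleftrightarrow> x \<le> exp c" using assms by (metis exp_le_cancel_iff exp_ln)
  moreover have "-c \<le> ln x \<longleftrightarrow> exp (-c) \<le> x" using assms by (metis exp_le_cancel_iff exp_ln)
  ultimately show ?thesis by linarith
qed

theorem lemmaH1:
  fixes pref :: "'s \<Rightarrow> 'a::finite \<Rightarrow> real"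
    and r :: "'s \<Rightarrow> 'a \<Rightarrow> real"
    and \<beta> R :: real
    and P :: "('s \<Rightarrow> 'a \<Rightarrow> real) set"
  assumes pref_policy: "is_policy pref"
    and pref_full: "\<forall>s a. pref s a > 0"
    and beta_pos: "\<beta> > 0"
    and R_pos: "R > 0"
    and r_range: "\<forall>s a. 0 \<le> r s a \<and> r s a \<le> R"
    and P_finite: "finite P"
    and P_policies: "\<forall>p\<in>P. is_policy p"
    and cond_I: "opt_policy pref \<beta> r \<in> P"
    and cond_II: "bounded_logratio pref R \<beta> P"
  shows "opt_policy pref \<beta> r \<in> conv_pol P \<and> bounded_logratio pref R \<beta> (conv_pol P)"
proof
  show "opt_policy pref \<beta> r \<in> conv_pol P"
    unfolding conv_pol_def
    apply (rule CollectI)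
    apply (rule exI[of _ 1], rule exI[of _ "\<lambda>_. 1"], rule exI[of _ "\<lambda>_. opt_policy pref \<beta> r"])
    using cond_I by simp
next
  define c where "c = R / \<beta>"
  have bnd: "exp (-c) * pref s a \<le> p s a \<and> p s a \<le> exp c * pref s a \<and> p s a > 0"
    if "p \<in> P" for p s a
  proof -
    have ps: "p s a > 0" "\<bar>ln (p s a / pref s a)\<bar> \<le> c"
      using cond_II that unfolding bounded_logratio_def c_def by auto
    have pr: "pref s a > 0" using pref_full by auto
    have "exp (-c) \<le> p s a / pref s a \<and> p s a / pref s a \<le> exp c"
      using abs_ln_iff[of "p s a / pref s a" c] ps pr by auto
    thus ?thesis using pr ps by (simp add: field_simps)
  qed
  show "bounded_logratio pref R \<beta> (conv_pol P)"
    unfolding bounded_logratio_def c_def[symmetric]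
  proof (intro ballI allI)
    fix q s a assume "q \<in> conv_pol P"
    then have "\<exists>(n::nat) l p. n \<ge> 1 \<and> (\<forall>i<n. l i \<ge> 0) \<and> (\<Sum>i<n. l i) = 1 \<and> (\<forall>i<n. p i \<in> P) \<and> q = (\<lambda>s a. \<Sum>i<n. l i * p i s a)"
      unfolding conv_pol_def by (rule CollectD)
    then obtain n :: nat and l p where n: "n \<ge> 1" and l: "\<forall>i<n. l i \<ge> 0" and ls: "(\<Sum>i<n. l i) = 1"
      and p: "\<forall>i<n. p i \<in> P" and q: "q = (\<lambda>s a. \<Sum>i<n. l i * p i s a)"
      by blast
    have pr: "pref s a > 0" using pref_full by auto
    have up: "q s a \<le> exp c * pref s a"
    proof -
      have "q s a \<le> (\<Sum>i<n. l i * (exp c * pref s a))"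
        unfolding q by (rule sum_mono) (use l p bnd in \<open>auto intro: mult_left_mono\<close>)
      also have "\<dots> = exp c * pref s a" using ls by (simp add: sum_distrib_right[symmetric])
      finally show ?thesis .
    qed
    have lo: "exp (-c) * pref s a \<le> q s a"
    proof -
      have "(\<Sum>i<n. l i * (exp (-c) * pref s a)) \<le> q s a"
        unfolding q by (rule sum_mono) (use l p bnd in \<open>auto intro: mult_left_mono\<close>)
      moreover have "(\<Sum>i<n. l i * (exp (-c) * pref s a)) = exp (-c) * pref s a"
        using ls by (simp add: sum_distrib_right[symmetric])
      ultimately show ?thesis by simp
    qed
    have qpos: "q s a > 0" using lo pr
      by (smt (verit) exp_gt_zero mult_pos_pos)
    have "exp (-c) \<le> q s a / pref s a \<and> q s a / pref s a \<le> exp c"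
      using lo up pr by (simp add: field_simps)
    then show "q s a > 0 \<and> \<bar>ln (q s a / pref s a)\<bar> \<le> c"
      using qpos pr abs_ln_iff[of "q s a / pref s a" c] by auto
  qed
qed

end
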